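(* In the setting below, let $a\in\mathcal{B}(x)\setminus\mathcal{B}(y)$, $b\in\mathcal{B}(y)$, with $x\neq y$ and $[x,y]=(x_0,\dots,x_m)$. (i) If $\gamma\in\mathcal{P}h(a,b;\mathcal{B}(y)^\complement)$ and $\gamma=\gamma_1\ast\cdots\ast\gamma_l\ast\gamma_f$ is its decomposition along $[x,y]$ with crossing vertices $(c_0,\dots,c_l)$, then $c_l=b$ and $\gamma_f=(b)$. (ii) For every $(c_0,\dots,c_l)\in\Xi_{[x,y]}$ with crossing indices $(i_1,\dots,i_l)$, the map $(\gamma_1,\dots,\gamma_l)\mapsto\gamma_1\ast\cdots\ast\gamma_l$ is a bijection from $\prod_{s=1}^l\mathcal{P}h(c_{s-1},c_s;\mathcal{B}(x_{i_s})^\complement)$ onto the set of $p$-admissible paths in $\mathcal{P}h(c_0,c_l;\mathcal{B}(x_m)^\complement)$ whose crossing vertices along $[x,y]$ are $(c_0,\dots,c_l)$.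
   Context: Setting: $X$ a tree of bounded valence, $p$ a transition kernel on $X_0$ with $(X_0,p)$ irreducible, $k\ge0$ with $d(u,v)>k\Rightarrow p(u,v)=0$. A $p$-admissible path is $(\omega_0,\dots,\omega_n)$ with $p(\omega_{i-1},\omega_i)>0$; $\mathcal{P}h(a,b;\Omega)$ is the set of those from $a$ to $b$ with intermediate vertices in $\Omega$; $\ast$ is concatenation. $\mathcal{B}(w)=\{v:d(w,v)\le k\}$, $\partial\mathcal{B}(w)=\{v:d(w,v)=k+1\}$, $\Xi_w=\{(a,b)\in\partial\mathcal{B}(w)\times\mathcal{B}(w):\mathcal{P}h(a,b;\mathcal{B}(w)^\complement)\ne\emptyset\}$. $\Xi_{[x,y]}$: tuples $(c_0,\dots,c_l)$, $0<l\le m$, with integers $0<i_1<\dots<i_l\le m$ (crossing indices, $i_s=1+\max\{i:c_{s-1}\in\mathcal{B}(x_i)\}$) such that $c_0\in\mathcal{B}(x)\cap\partial\mathcal{B}(x_{i_1})$, $c_j\in\mathcal{B}(x_{i_j})\cap\partial\mathcal{B}(x_{i_{j+1}})$, $c_l\in\mathcal{B}(x_{i_l})\cap\mathcal{B}(y)$, $(c_{j-1},c_j)\in\Xi_{x_{i_j}}$. The decomposition of a $p$-admissible path $\gamma$ from $a'\in\mathcal{B}(x)\setminus\mathcal{B}(y)$ to $b'\in\mathcal{B}(y)$ along $[x,y]$ is the unique writing $\gamma=\gamma_1\ast\cdots\ast\gamma_l\ast\gamma_f$ with $(c_0,\dots,c_l)\in\Xi_{[x,y]}$ (the crossing vertices),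 $\gamma_s\in\mathcal{P}h(c_{s-1},c_s;\mathcal{B}(x_{i_s})^\complement)$ and $\gamma_f$ a $p$-admissible path from $c_l$ to $b'$; concretely $c_s$ is the first vertex of $\gamma$ lying in $\mathcal{B}(x_{i_s})$. *)

theory Defs
  imports "HOL-Analysis.Analysis"
begin

definition is_walk :: "('v \<Rightarrow> 'v \<Rightarrow> bool) \<Rightarrow> 'v list \<Rightarrow> bool" where
  "is_walk E ws \<longleftrightarrow> ws \<noteq> [] \<and> (\<forall>i. Suc i < length ws \<longrightarrow> E (ws!i) (ws!Suc i))"

definition is_tree :: "('v \<Rightarrow> 'v \<Rightarrow> bool) \<Rightarrow> bool" where
  "is_tree E \<longleftrightarrow> (\<forall>u v. E u v \<longrightarrow> E v u) \<and> (\<forall>v. \<not> E v v) \<and>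
     (\<forall>u v. \<exists>!ws. is_walk E ws \<and> distinct ws \<and> hd ws = u \<and> last ws = v)"

definition bounded_valence :: "('v \<Rightarrow> 'v \<Rightarrow> bool) \<Rightarrow> bool" where
  "bounded_valence E \<longleftrightarrow> (\<exists>N::nat. \<forall>v. finite {w. E v w} \<and> card {w. E v w} \<le> N)"

definition gdist :: "('v \<Rightarrow> 'v \<Rightarrow> bool) \<Rightarrow> 'v \<Rightarrow> 'v \<Rightarrow> nat" where
  "gdist E u v = (LEAST n. \<exists>ws. is_walk E ws \<and> hd ws = u \<and> last ws = v \<and> length ws = Suc n)"

definition geodesic :: "('v \<Rightarrow> 'v \<Rightarrow> bool) \<Rightarrow> 'v \<Rightarrow> 'v \<Rightarrow> 'v list \<Rightarrow> bool" where
  "geodesic E x y xs \<longleftrightarrow> is_walk E xs \<and> hd xs = x \<and> last xs = y \<and> length xs = Suc (gdist E x y)"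

definition transition_kernel :: "('v \<Rightarrow> 'v \<Rightarrow> real) \<Rightarrow> bool" where
  "transition_kernel p \<longleftrightarrow> (\<forall>u v. 0 \<le> p u v) \<and> (\<forall>u. (p u has_sum 1) UNIV)"

definition adm :: "('v \<Rightarrow> 'v \<Rightarrow> real) \<Rightarrow> 'v list \<Rightarrow> bool" where
  "adm p \<gamma> \<longleftrightarrow> \<gamma> \<noteq> [] \<and> (\<forall>i. Suc i < length \<gamma> \<longrightarrow> 0 < p (\<gamma>!i) (\<gamma>!Suc i))"

definition irreducible_kernel :: "('v \<Rightarrow> 'v \<Rightarrow> real) \<Rightarrow> bool" where
  "irreducible_kernel p \<longleftrightarrow> (\<forall>u v. \<exists>\<gamma>. adm p \<gamma> \<and> hd \<gamma> = u \<and> last \<gamma> = v)"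

definition Ph :: "('v \<Rightarrow> 'v \<Rightarrow> real) \<Rightarrow> 'v \<Rightarrow> 'v \<Rightarrow> 'v set \<Rightarrow> 'v list set" where
  "Ph p a b \<Omega> = {\<gamma>. adm p \<gamma> \<and> hd \<gamma> = a \<and> last \<gamma> = b \<and>
                     (\<forall>i. 0 < i \<and> Suc i < length \<gamma> \<longrightarrow> \<gamma>!i \<in> \<Omega>)}"

text \<open>Concatenation gamma * delta (the last vertex of gamma is the first of delta).\<close>
definition pcat :: "'v list \<Rightarrow> 'v list \<Rightarrow> 'v list" where
  "pcat \<gamma> \<delta> = \<gamma> @ tl \<delta>"

definition pchain :: "'v list list \<Rightarrow> 'v list" where
  "pchain gs = foldl pcat (hd gs) (tl gs)"

definition kball :: "('v \<Rightarrow> 'v \<Rightarrow> bool) \<Rightarrow> nat \<Rightarrow> 'v \<Rightarrow> 'v set" where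
  "kball E k w = {v. gdist E w v \<le> k}"

definition ksphere :: "('v \<Rightarrow> 'v \<Rightarrow> bool) \<Rightarrow> nat \<Rightarrow> 'v \<Rightarrow> 'v set" where
  "ksphere E k w = {v. gdist E w v = Suc k}"

definition Xi_v :: "('v \<Rightarrow> 'v \<Rightarrow> bool) \<Rightarrow> ('v \<Rightarrow> 'v \<Rightarrow> real) \<Rightarrow> nat \<Rightarrow> 'v \<Rightarrow> ('v \<times> 'v) set" where
  "Xi_v E p k w = {(a,b). a \<in> ksphere E k w \<and> b \<in> kball E k w \<and> Ph p a b (- kball E k w) \<noteq> {}}"

definition cidx :: "('v \<Rightarrow> 'v \<Rightarrow> bool) \<Rightarrow> nat \<Rightarrow> 'v list \<Rightarrow> 'v \<Rightarrow> nat" where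
  "cidx E k xs c = Suc (Max {i. i < length xs \<and> c \<in> kball E k (xs!i)})"

definition Xi_geod :: "('v \<Rightarrow> 'v \<Rightarrow> bool) \<Rightarrow> ('v \<Rightarrow> 'v \<Rightarrow> real) \<Rightarrow> nat \<Rightarrow> 'v list \<Rightarrow> 'v list set" where
  "Xi_geod E p k xs = {cs. let l = length cs - 1; m = length xs - 1;
       ix = (\<lambda>s. cidx E k xs (cs!(s-1))) in
     0 < l \<and> l \<le> m \<and>
     (\<forall>s\<in>{1..l}. 0 < ix s \<and> ix s \<le> m) \<and>
     (\<forall>s. 1 \<le> s \<and> s < l \<longrightarrow> ix s < ix (Suc s)) \<and>
     cs!0 \<in> kball E k (xs!0) \<inter> ksphere E k (xs!(ix 1)) \<and>
     (\<forall>j. 1 \<le> j \<and> j < l \<longrightarrow> cs!j \<in> kball E k (xs!(ix j)) \<inter> ksphere E k (xs!(ix (Suc j)))) \<and>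
     cs!l \<in> kball E k (xs!(ix l)) \<inter> kball E k (xs!m) \<and>
     (\<forall>j\<in>{1..l}. (cs!(j-1), cs!j) \<in> Xi_v E p k (xs!(ix j)))}"

text \<open>gamma = gamma_1 * ... * gamma_l * gamma_f is a decomposition along xs with crossing
  vertices cs (gs = [gamma_1,...,gamma_l], 0-based: gs!s goes from cs!s to cs!(s+1) avoiding
  B(x_(i_(s+1))), where i_(s+1) = cidx (cs!s)).\<close>
definition decomp :: "('v \<Rightarrow> 'v \<Rightarrow> bool) \<Rightarrow> ('v \<Rightarrow> 'v \<Rightarrow> real) \<Rightarrow> nat \<Rightarrow> 'v list \<Rightarrow>
    'v list \<Rightarrow> 'v list \<Rightarrow> 'v list list \<Rightarrow> 'v list \<Rightarrow> bool" where
  "decomp E p k xs \<gamma> cs gs gf \<longleftrightarrow>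
     cs \<in> Xi_geod E p k xs \<and> length gs = length cs - 1 \<and>
     (\<forall>s < length gs. gs!s \<in> Ph p (cs!s) (cs!Suc s) (- kball E k (xs ! cidx E k xs (cs!s)))) \<and>
     adm p gf \<and> hd gf = last cs \<and> \<gamma> = pcat (pchain gs) gf"

end

theory Submission
  imports Defs
begin


lemma succ_nth: "successively P xs \<longleftrightarrow> (\<forall>i. Suc i < length xs \<longrightarrow> P (xs!i) (xs!Suc i))"
proof (induction xs)
  case Nil then show ?case by simp
next
  case (Cons x xs)
  show ?case
  proof
    assume h: "successively P (x # xs)"
    show "\<forall>i. Suc i < length (x # xs) \<longrightarrow> P ((x # xs) ! i) ((x # xs) ! Suc i)"
    proof (intro allI impI)
      fix i assume i: "Suc i < length (x#xs)"
      show "P ((x # xs) ! i) ((x # xs) ! Suc i)"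
      proof (cases i)
        case 0 then show ?thesis using h i by (cases xs) auto
      next
        case (Suc j) then show ?thesis using h i Cons.IH by (auto simp: successively_Cons)
      qed
    qed
  next
    assume h: "\<forall>i. Suc i < length (x # xs) \<longrightarrow> P ((x # xs) ! i) ((x # xs) ! Suc i)"
    have "successively P xs" unfolding Cons.IH using h by fastforce
    moreover have "xs \<noteq> [] \<Longrightarrow> P x (hd xs)" using h[rule_format, of 0] by (cases xs) auto
    ultimately show "successively P (x # xs)" by (auto simp: successively_Cons)
  qed
qed

lemma walk_succ: "is_walk E ws \<longleftrightarrow> ws \<noteq> [] \<and> successively E ws"
  unfolding is_walk_def succ_nth by simp

lemma adm_succ: "adm p ws \<longleftrightarrow> ws \<noteq> [] \<and> successively (\<lambda>u v. 0 < p u v) ws"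
  unfolding adm_def succ_nth by simp

lemma inter_set: "(\<forall>i. 0 < i \<and> Suc i < length g \<longrightarrow> g!i \<in> A) \<longleftrightarrow> set (butlast (tl g)) \<subseteq> A"
proof
  assume h: "\<forall>i. 0 < i \<and> Suc i < length g \<longrightarrow> g!i \<in> A"
  show "set (butlast (tl g)) \<subseteq> A"
  proof
    fix v assume "v \<in> set (butlast (tl g))"
    then obtain j where j: "j < length (butlast (tl g))" "v = butlast (tl g) ! j" by (auto simp: in_set_conv_nth)
    then have "v = g ! Suc j" by (simp add: nth_butlast nth_tl)
    then show "v \<in> A" using h j by auto
  qed
next
  assume h: "set (butlast (tl g)) \<subseteq> A"
  show "\<forall>i. 0 < i \<and> Suc i < length g \<longrightarrow> g!i \<in> A"
  proof (intro allI impI)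
    fix i assume i: "0 < i \<and> Suc i < length g"
    then obtain j where j: "i = Suc j" by (cases i) auto
    have "butlast (tl g) ! j = g ! i" using i j by (simp add: nth_butlast nth_tl)
    moreover have "j < length (butlast (tl g))" using i j by simp
    ultimately show "g ! i \<in> A" using h by (metis nth_mem subsetD)
  qed
qed

lemma Ph_alt: "\<gamma> \<in> Ph p a b A \<longleftrightarrow> \<gamma> \<noteq> [] \<and> successively (\<lambda>u v. 0 < p u v) \<gamma> \<and> hd \<gamma> = a \<and> last \<gamma> = b
   \<and> set (butlast (tl \<gamma>)) \<subseteq> A"
  unfolding Ph_def mem_Collect_eq adm_succ inter_set by auto

lemma pcat_Ph:
  assumes "g1 \<in> Ph p a b A" "g2 \<in> Ph p b c A" "b \<in> A"
  shows "pcat g1 g2 \<in> Ph p a c A"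
proof -
  obtain t where g2: "g2 = b # t" using assms(2) unfolding Ph_alt by (cases g2) auto
  obtain r where g1: "g1 = a # r" using assms(1) unfolding Ph_alt by (cases g1) auto
  have lr: "r \<noteq> [] \<Longrightarrow> last r = b" using assms(1) g1 unfolding Ph_alt by auto
  have s1: "successively (\<lambda>u v. 0 < p u v) (a#r)" "set (butlast r) \<subseteq> A" using assms(1) g1 unfolding Ph_alt by auto
  have s2: "successively (\<lambda>u v. 0 < p u v) (b#t)" "set (butlast t) \<subseteq> A" "last (b#t) = c" using assms(2) g2 unfolding Ph_alt by auto
  have lab: "last (a#r) = b" using assms(1) g1 unfolding Ph_alt by auto
  have t1: "successively (\<lambda>u v. 0 < p u v) t" "t \<noteq> [] \<Longrightarrow> 0 < p b (hd t)"
    using s2(1) by (auto simp: successively_Cons)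
  have "successively (\<lambda>u v. 0 < p u v) ((a#r) @ t)"
    apply (simp only: successively_append_iff) using s1 lab t1 by metis
  moreover have "set (butlast (r @ t)) \<subseteq> A"
  proof (cases "t = []")
    case True then show ?thesis using s1 by simp
  next
    case False
    have "set r \<subseteq> A"
    proof (cases "r = []")
      case False
      then have "r = butlast r @ [last r]" by simp
      then have "set r = set (butlast r) \<union> {b}" using lr False by (metis Un_insert_right empty_set list.simps(15) set_append sup_bot.right_neutral)
      then show ?thesis using s1 assms(3) by auto
    qed simp
    then show ?thesis using False s2 by (auto simp: butlast_append)
  qed
  moreover have "last ((a#r) @ t) = c" using s2 lab by (cases t) auto
  moreover have "hd ((a#r) @ t) = a" by simp
  moreover have "tl ((a#r) @ t) = r @ t" by simp
  moreover have "(a#r) @ t \<noteq> []" by simp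
  ultimately show ?thesis unfolding Ph_alt pcat_def g1 g2 list.sel(3) by metis
qed

lemma pcat_assoc: "b \<noteq> [] \<Longrightarrow> pcat (pcat a b) c = pcat a (pcat b c)"
  unfolding pcat_def by (cases b) auto

lemma pcat_ne: "a \<noteq> [] \<Longrightarrow> pcat a b \<noteq> []"
  unfolding pcat_def by simp

lemma foldl_pcat: "h \<noteq> [] \<Longrightarrow> [] \<notin> set t \<Longrightarrow> foldl pcat (pcat g h) t = pcat g (foldl pcat h t)"
proof (induction t arbitrary: h)
  case Nil then show ?case by simp
next
  case (Cons x t)
  have "foldl pcat (pcat g h) (x # t) = foldl pcat (pcat g (pcat h x)) t"
    using Cons.prems by (simp add: pcat_assoc)
  also have "\<dots> = pcat g (foldl pcat (pcat h x) t)"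
    using Cons by (simp add: pcat_ne)
  finally show ?case by simp
qed

lemma pchain_Cons: "gs \<noteq> [] \<Longrightarrow> [] \<notin> set gs \<Longrightarrow> pchain (g#gs) = pcat g (pchain gs)"
  unfolding pchain_def by (cases gs) (auto simp: foldl_pcat)

lemma pchain_single: "pchain [g] = g" unfolding pchain_def by simp

lemma Ph_ne: "g \<in> Ph p a b A \<Longrightarrow> g \<noteq> []" unfolding Ph_def adm_def by auto

lemma chain_Ph:
  "gs \<noteq> [] \<Longrightarrow> (\<forall>s<length gs. gs!s \<in> Ph p (c s) (c (Suc s)) A) \<Longrightarrow>
   (\<forall>j. 0 < j \<and> j < length gs \<longrightarrow> c j \<in> A) \<Longrightarrow> pchain gs \<in> Ph p (c 0) (c (length gs)) A"
proof (induction gs arbitrary: c)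
  case Nil then show ?case by simp
next
  case (Cons g gs)
  show ?case
  proof (cases "gs = []")
    case True then show ?thesis using Cons.prems by (simp add: pchain_single)
  next
    case False
    have ne: "[] \<notin> set gs"
    proof
      assume "[] \<in> set gs"
      then obtain s where "s < length gs" "gs!s = []" by (auto simp: in_set_conv_nth)
      then show False using Cons.prems(2)[rule_format, of "Suc s"] by (auto dest: Ph_ne)
    qed
    have h2: "\<forall>s<length gs. gs!s \<in> Ph p (c (Suc s)) (c (Suc (Suc s))) A"
    proof (intro allI impI)
      fix s assume "s < length gs"
      then show "gs!s \<in> Ph p (c (Suc s)) (c (Suc (Suc s))) A" using Cons.prems(2)[rule_format, of "Suc s"] by simp
    qed
    have h3: "\<forall>j. 0 < j \<and> j < length gs \<longrightarrow> c (Suc j) \<in> A"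
      using Cons.prems(3) by simp
    have IH: "pchain gs \<in> Ph p (c 1) (c (Suc (length gs))) A"
      using Cons.IH[OF False h2 h3] by simp
    have g: "g \<in> Ph p (c 0) (c 1) A" using Cons.prems(2)[rule_format, of 0] by simp
    have "c 1 \<in> A" using Cons.prems(3) False by simp
    then show ?thesis using pcat_Ph[OF g IH] pchain_Cons[OF False ne] by simp
  qed
qed

lemma first_hit:
  assumes "g1 @ t1 = g2 @ t2" "g1 \<in> Ph p a b (-B)" "g2 \<in> Ph p a b (-B)" "a \<notin> B" "b \<in> B"
  shows "g1 = g2"
proof -
  have P: "\<And>g i. g \<in> Ph p a b (-B) \<Longrightarrow> i < length g - 1 \<Longrightarrow> g!i \<notin> B"
  proof -
    fix g i assume g: "g \<in> Ph p a b (-B)" and i: "i < length g - 1"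
    show "g!i \<notin> B"
    proof (cases i)
      case 0 then show ?thesis using g assms(4) unfolding Ph_def adm_def by (cases g) auto
    next
      case (Suc j) then show ?thesis using g i unfolding Ph_def by auto
    qed
  qed
  have L: "\<And>g. g \<in> Ph p a b (-B) \<Longrightarrow> g!(length g - 1) = b"
    unfolding Ph_def adm_def by (auto simp: last_conv_nth)
  have len: "length g1 = length g2"
  proof (rule ccontr)
    assume "length g1 \<noteq> length g2"
    then consider "length g1 < length g2" | "length g2 < length g1" by linarith
    then show False
    proof cases
      case 1
      have ne: "g1 \<noteq> []" using assms(2) by (auto dest: Ph_ne)
      have lt: "length g1 - 1 < length g2" using 1 by linarith
      have e1: "g2 ! (length g1 - 1) = (g2 @ t2) ! (length g1 - 1)" using lt by (simp only: nth_append if_True)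
      have lt2: "length g1 - 1 < length g1" using ne by simp
      have e2: "(g2 @ t2) ! (length g1 - 1) = g1 ! (length g1 - 1)" unfolding assms(1)[symmetric] using lt2 by (simp only: nth_append if_True)
      have "g2 ! (length g1 - 1) \<in> B" using L[OF assms(2)] assms(5) e1 e2 by simp
      moreover have "length g1 - 1 < length g2 - 1" using 1 ne by (cases g1) auto
      ultimately show False using P[OF assms(3)] by blast
    next
      case 2
      have ne: "g2 \<noteq> []" using assms(3) by (auto dest: Ph_ne)
      have lt: "length g2 - 1 < length g1" using 2 by linarith
      have e1: "g1 ! (length g2 - 1) = (g1 @ t1) ! (length g2 - 1)" using lt by (simp only: nth_append if_True)
      have lt2: "length g2 - 1 < length g2" using ne by simp
      have e2: "(g1 @ t1) ! (length g2 - 1) = g2 ! (length g2 - 1)" unfolding assms(1) using lt2 by (simp only: nth_append if_True)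
      have "g1 ! (length g2 - 1) \<in> B" using L[OF assms(3)] assms(5) e1 e2 by simp
      moreover have "length g2 - 1 < length g1 - 1" using 2 ne by (cases g2) auto
      ultimately show False using P[OF assms(2)] by blast
    qed
  qed
  then show ?thesis using assms(1) by (simp add: append_eq_append_conv)
qed

lemma chain_inj:
  "length gs1 = length gs2 \<Longrightarrow>
   (\<forall>s<length gs1. gs1!s \<in> Ph p (c s) (c (Suc s)) (-B s) \<and> gs2!s \<in> Ph p (c s) (c (Suc s)) (-B s)
      \<and> c s \<notin> B s \<and> c (Suc s) \<in> B s) \<Longrightarrow>
   pchain gs1 = pchain gs2 \<Longrightarrow> gs1 = gs2"
proof (induction gs1 arbitrary: gs2 c B)
  case Nil then show ?case by simp
next
  case (Cons g1 r1)
  obtain g2 r2 where gs2: "gs2 = g2 # r2" using Cons.prems(1) by (cases gs2) auto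
  have g1: "g1 \<in> Ph p (c 0) (c 1) (-B 0)" and g2: "g2 \<in> Ph p (c 0) (c 1) (-B 0)"
    and c0: "c 0 \<notin> B 0" and c1: "c 1 \<in> B 0"
    using Cons.prems(2)[rule_format, of 0] gs2 by auto
  show ?case
  proof (cases "r1 = []")
    case True
    then have "r2 = []" using Cons.prems(1) gs2 by simp
    then show ?thesis using True Cons.prems(3) gs2 by (simp add: pchain_single)
  next
    case False
    have r2: "r2 \<noteq> []" using Cons.prems(1) gs2 False by auto
    have ne1: "[] \<notin> set r1"
    proof
      assume "[] \<in> set r1"
      then obtain s where "s < length r1" "r1!s = []" by (auto simp: in_set_conv_nth)
      then show False using Cons.prems(2)[rule_format, of "Suc s"] by (auto dest: Ph_ne)
    qed
    have ne2: "[] \<notin> set r2"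
    proof
      assume "[] \<in> set r2"
      then obtain s where "s < length r2" "r2!s = []" by (auto simp: in_set_conv_nth)
      then show False using Cons.prems(2)[rule_format, of "Suc s"] Cons.prems(1) gs2 by (auto dest: Ph_ne)
    qed
    have len: "length r1 = length r2" using Cons.prems(1) gs2 by simp
    have Q: "\<forall>s<length r1. r1!s \<in> Ph p (c (Suc s)) (c (Suc (Suc s))) (-B (Suc s)) \<and> r2!s \<in> Ph p (c (Suc s)) (c (Suc (Suc s))) (-B (Suc s))
      \<and> c (Suc s) \<notin> B (Suc s) \<and> c (Suc (Suc s)) \<in> B (Suc s)"
    proof (intro allI impI)
      fix s assume "s < length r1"
      then show "r1!s \<in> Ph p (c (Suc s)) (c (Suc (Suc s))) (-B (Suc s)) \<and> r2!s \<in> Ph p (c (Suc s)) (c (Suc (Suc s))) (-B (Suc s))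
      \<and> c (Suc s) \<notin> B (Suc s) \<and> c (Suc (Suc s)) \<in> B (Suc s)"
        using Cons.prems(2)[rule_format, of "Suc s"] gs2 by simp
    qed
    have U: "\<And>g a b A. g \<in> Ph p a b A \<Longrightarrow> g \<in> Ph p a b UNIV" unfolding Ph_def by auto
    have P1: "pchain r1 \<in> Ph p (c 1) (c (Suc (length r1))) UNIV"
      using chain_Ph[OF False, of p "\<lambda>j. c (Suc j)" UNIV] Q U by (simp add: Ph_def)
    have P2: "pchain r2 \<in> Ph p (c 1) (c (Suc (length r2))) UNIV"
      using chain_Ph[OF r2, of p "\<lambda>j. c (Suc j)" UNIV] Q U len by (simp add: Ph_def)
    have "g1 @ tl (pchain r1) = g2 @ tl (pchain r2)"
      using Cons.prems(3) gs2 pchain_Cons[OF False ne1] pchain_Cons[OF r2 ne2] by (simp add: pcat_def)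
    moreover have eq: "g1 = g2" using first_hit[OF calculation g1 g2 c0 c1] .
    ultimately have "tl (pchain r1) = tl (pchain r2)" by simp
    moreover have "hd (pchain r1) = hd (pchain r2)" "pchain r1 \<noteq> []" "pchain r2 \<noteq> []"
      using P1 P2 unfolding Ph_def adm_def by auto
    ultimately have "pchain r1 = pchain r2" by (metis list.collapse)
    then have "r1 = r2"
      using Cons.IH[OF len Q] by simp
    then show ?thesis using eq gs2 by simp
  qed
qed



lemma succ_take: "successively P xs \<Longrightarrow> successively P (take n xs)"
  unfolding succ_nth by auto

lemma succ_drop: "successively P xs \<Longrightarrow> successively P (drop n xs)"
  unfolding succ_nth by auto

lemma walk_append:
  assumes "is_walk E xs" "is_walk E ys" "last xs = hd ys"
  shows "is_walk E (xs @ tl ys)" "hd (xs @ tl ys) = hd xs" "last (xs @ tl ys) = last ys"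
    "length (xs @ tl ys) = length xs + length ys - 1"
proof -
  obtain y t where ys: "ys = y # t" using assms(2) unfolding is_walk_def by (cases ys) auto
  have t1: "successively E t" "t \<noteq> [] \<Longrightarrow> E y (hd t)"
    using assms(2) ys by (auto simp: walk_succ successively_Cons)
  have "successively E (xs @ t)"
    apply (simp only: successively_append_iff) using assms(1,3) ys t1 walk_succ by auto
  then show "is_walk E (xs @ tl ys)" using assms(1) ys walk_succ by auto
  show "hd (xs @ tl ys) = hd xs" using assms(1) unfolding is_walk_def by simp
  show "last (xs @ tl ys) = last ys" using assms(3) ys by (cases t) auto
  show "length (xs @ tl ys) = length xs + length ys - 1" using ys assms(1) unfolding is_walk_def by auto
qed

context
  fixes E :: "'v \<Rightarrow> 'v \<Rightarrow> bool"
  assumes tree: "is_tree E"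
begin

lemma tsym: "E u v \<Longrightarrow> E v u" using tree unfolding is_tree_def by blast
lemma tirr: "\<not> E v v" using tree unfolding is_tree_def by blast
lemma tuniq: "is_walk E w1 \<Longrightarrow> distinct w1 \<Longrightarrow> hd w1 = u \<Longrightarrow> last w1 = v \<Longrightarrow>
  is_walk E w2 \<Longrightarrow> distinct w2 \<Longrightarrow> hd w2 = u \<Longrightarrow> last w2 = v \<Longrightarrow> w1 = w2"
  using tree unfolding is_tree_def by blast

lemma tconn: "\<exists>ws. is_walk E ws \<and> hd ws = u \<and> last ws = v"
  using tree unfolding is_tree_def by blast

lemma dwalk: "\<exists>ws. is_walk E ws \<and> hd ws = u \<and> last ws = v \<and> length ws = Suc (gdist E u v)"
proof -
  obtain ws where ws: "is_walk E ws" "hd ws = u" "last ws = v" using tconn by blast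
  then have "\<exists>n ws. is_walk E ws \<and> hd ws = u \<and> last ws = v \<and> length ws = Suc n"
    by (intro exI[of _ "length ws - 1"] exI[of _ ws]) (auto simp: is_walk_def)
  then show ?thesis unfolding gdist_def by (rule LeastI_ex)
qed

lemma dle: "is_walk E ws \<Longrightarrow> hd ws = u \<Longrightarrow> last ws = v \<Longrightarrow> gdist E u v \<le> length ws - 1"
  unfolding gdist_def
  by (rule Least_le) (auto simp: is_walk_def intro!: exI[of _ ws])

end

lemma dle': "is_walk E ws \<Longrightarrow> hd ws = u \<Longrightarrow> last ws = v \<Longrightarrow> gdist E u v \<le> length ws - 1"
  unfolding gdist_def
  by (rule Least_le) (auto simp: is_walk_def intro!: exI[of _ ws])

context
  fixes E :: "'v \<Rightarrow> 'v \<Rightarrow> bool"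
  assumes tree: "is_tree E"
begin

lemma dtri: "gdist E u w \<le> gdist E u v + gdist E v w"
proof -
  obtain w1 where w1: "is_walk E w1" "hd w1 = u" "last w1 = v" "length w1 = Suc (gdist E u v)"
    using dwalk[OF tree] by blast
  obtain w2 where w2: "is_walk E w2" "hd w2 = v" "last w2 = w" "length w2 = Suc (gdist E v w)"
    using dwalk[OF tree] by blast
  have "last w1 = hd w2" using w1 w2 by simp
  note W = walk_append[OF w1(1) w2(1) this]
  show ?thesis using dle'[OF W(1)] W w1 w2 by simp
qed

lemma dsym: "gdist E u v = gdist E v u"
proof -
  have *: "gdist E v u \<le> gdist E u v" for u v
  proof -
    obtain w1 where w1: "is_walk E w1" "hd w1 = u" "last w1 = v" "length w1 = Suc (gdist E u v)"
      using dwalk[OF tree] by blast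
    have "successively (\<lambda>x y. E y x) w1 = successively E w1"
      using tsym[OF tree] by (metis successively_mono)
    then have "is_walk E (rev w1)" using w1 by (simp add: walk_succ)
    moreover have "hd (rev w1) = v" "last (rev w1) = u" using w1 unfolding is_walk_def
      by (auto simp: hd_rev last_rev)
    ultimately show ?thesis using dle'[of E "rev w1" v u] w1 by simp
  qed
  show ?thesis using *[of u v] *[of v u] by simp
qed

lemma dedge: "E u v \<Longrightarrow> gdist E u v \<le> 1"
  using dle'[of E "[u,v]" u v] by (simp add: is_walk_def nth_Cons split: nat.splits)

lemma SUB: "is_walk E ws \<Longrightarrow> j < length ws \<Longrightarrow> gdist E (hd ws) (ws!j) \<le> j"
proof -
  assume w: "is_walk E ws" and j: "j < length ws"
  have "is_walk E (take (Suc j) ws)" using w succ_take by (auto simp: walk_succ)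
  moreover have "hd (take (Suc j) ws) = hd ws" using w by (simp add: is_walk_def)
  moreover have "last (take (Suc j) ws) = ws!j" using j by (simp add: take_Suc_conv_app_nth)
  ultimately show ?thesis using dle'[of E "take (Suc j) ws"] j by fastforce
qed

lemma SUF: "is_walk E ws \<Longrightarrow> j < length ws \<Longrightarrow> gdist E (ws!j) (last ws) \<le> length ws - 1 - j"
proof -
  assume w: "is_walk E ws" and j: "j < length ws"
  have "is_walk E (drop j ws)" using w j succ_drop by (auto simp: walk_succ)
  moreover have "hd (drop j ws) = ws!j" using j by (simp add: hd_drop_conv_nth)
  moreover have "last (drop j ws) = last ws" using j by simp
  ultimately show ?thesis using dle'[of E "drop j ws"] j by fastforce
qed

lemma shortest:
  obtains ws where "is_walk E ws" "hd ws = u" "last ws = v" "length ws = Suc (gdist E u v)" "distinct ws"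
proof -
  obtain ws where w: "is_walk E ws" "hd ws = u" "last ws = v" "length ws = Suc (gdist E u v)"
    using dwalk[OF tree] by blast
  have "distinct ws"
  proof (rule ccontr)
    assume "\<not> distinct ws"
    then obtain xs ys zs y where ws: "ws = xs@[y]@ys@[y]@zs" using not_distinct_decomp by blast
    have s: "successively E ws" using w walk_succ by auto
    have s1: "successively E (xs @ [y])" using s ws
      by (metis append_assoc successively_append_iff)
    have s2: "successively E ([y] @ zs)" using s ws
      by (metis successively_append_iff)
    have "successively E ((xs @ [y]) @ zs)"
      using s1 s2 by (auto simp: successively_append_iff successively_Cons)
    then have W: "is_walk E (xs @ [y] @ zs)" by (simp add: walk_succ)
    have "hd (xs @ [y] @ zs) = u" using w ws by (cases xs) auto
    moreover have "last (xs @ [y] @ zs) = v" using w ws by (cases zs) auto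
    ultimately have "gdist E u v \<le> length (xs @ [y] @ zs) - 1" using dle'[OF W] by blast
    then show False using w ws by simp
  qed
  then show ?thesis using w that by blast
qed

lemma parity: "E a b \<Longrightarrow> gdist E v a \<noteq> gdist E v b"
proof
  assume ab: "E a b" and eq: "gdist E v a = gdist E v b"
  define n where "n = gdist E v a"
  obtain P where P: "is_walk E P" "hd P = v" "last P = a" "length P = Suc n" "distinct P"
    using shortest n_def by metis
  obtain Q where Q: "is_walk E Q" "hd Q = v" "last Q = b" "length Q = Suc n" "distinct Q"
    using shortest n_def eq by metis
  have anb: "a \<noteq> b" using ab tirr[OF tree] by blast
  have "b \<notin> set P"
  proof
    assume "b \<in> set P"
    then obtain j where j: "j < length P" "P!j = b" by (auto simp: in_set_conv_nth)
    have "P \<noteq> []" using P(4) by auto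
    then have "P!n = a" using P(3,4) last_conv_nth[of P] by simp
    then have "j < n" using j P anb by (metis less_Suc_eq)
    moreover have "gdist E v b \<le> j" using SUB[OF P(1) j(1)] P j by simp
    ultimately show False using eq n_def by simp
  qed
  moreover have "is_walk E (P @ [b])" using P ab walk_append[OF P(1), of "[a,b]"]
    by (simp add: is_walk_def nth_Cons split: nat.splits)
  moreover have "hd (P @ [b]) = v" "last (P @ [b]) = b" using P by (auto simp: is_walk_def)
  ultimately have "P @ [b] = Q" using tuniq[OF tree, of "P@[b]" v b Q] P Q by auto
  then show False using P Q by (metis length_append_singleton n_not_Suc_n)
qed


lemma edge_claim:
  assumes ab: "E a b" and xy: "E x y" and x: "gdist E x a < gdist E x b" and y: "gdist E y b < gdist E y a"
  shows "x = a \<and> y = b"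
proof -
  define n where "n = gdist E x a"
  have "gdist E x b \<le> gdist E x a + gdist E a b" by (rule dtri)
  then have xb: "gdist E x b = Suc n" using dedge[OF ab] x n_def by simp
  have "gdist E y a \<le> gdist E y x + gdist E x a" by (rule dtri)
  moreover have "gdist E y x \<le> 1" using dedge tsym[OF tree] xy by blast
  moreover have "gdist E x b \<le> gdist E x y + gdist E y b" by (rule dtri)
  moreover have "gdist E x y \<le> 1" using dedge xy by blast
  ultimately have yb: "gdist E y b = n" and ya: "gdist E y a = Suc n" using xb y n_def by linarith+
  obtain P where P: "is_walk E P" "hd P = x" "last P = a" "length P = Suc n" "distinct P"
    using shortest n_def by metis
  obtain Q where Q: "is_walk E Q" "hd Q = y" "last Q = b" "length Q = Suc n" "distinct Q"
    using shortest yb by metis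
  have Pne: "P \<noteq> []" "Q \<noteq> []" using P Q by auto
  have "y \<notin> set P"
  proof
    assume "y \<in> set P"
    then obtain j where j: "j < length P" "P!j = y" by (auto simp: in_set_conv_nth)
    have "gdist E y a \<le> length P - 1 - j" using SUF[OF P(1) j(1)] P j by simp
    then show False using ya P by simp
  qed
  then have d1: "distinct (y # P)" using P by simp
  have w1: "is_walk E (y # P)" using P tsym[OF tree, OF xy] Pne
    by (auto simp: walk_succ successively_Cons)
  have "a \<notin> set Q"
  proof
    assume "a \<in> set Q"
    then obtain j where j: "j < length Q" "Q!j = a" by (auto simp: in_set_conv_nth)
    have "gdist E y a \<le> j" using SUB[OF Q(1) j(1)] Q j by simp
    then show False using ya Q j by simp
  qed
  then have d2: "distinct (Q @ [a])" using Q by simp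
  have w2: "is_walk E (Q @ [a])" using Q tsym[OF tree, OF ab] Pne
    by (auto simp: walk_succ successively_append_iff)
  have "y # P = Q @ [a]"
    using tuniq[OF tree w1 d1 _ _ w2 d2] P Q Pne by (simp add: last_ConsR)
  show ?thesis
  proof (cases n)
    case 0
    then have "P = [x]" "Q = [y]" using P Q by (cases P; cases Q; auto)+
    then show ?thesis using P Q by simp
  next
    case (Suc n')
    have "(y # P) ! n = P ! n'" using Suc by simp
    moreover have "(Q @ [a]) ! n = Q ! n" using Q by (simp add: nth_append)
    moreover have "Q ! n = b" using Q Pne last_conv_nth[of Q] by simp
    ultimately have "P ! n' = b" using \<open>y # P = Q @ [a]\<close> by simp
    then have "gdist E x b \<le> n'" using SUB[OF P(1), of n'] P Suc by simp
    then show ?thesis using xb Suc by simp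
  qed
qed

lemma side_inv:
  assumes ab: "E a b" and w: "is_walk E ws" and h: "gdist E (hd ws) a < gdist E (hd ws) b"
    and na: "a \<notin> set ws"
  shows "\<forall>j < length ws. gdist E (ws!j) a < gdist E (ws!j) b"
proof (intro allI impI)
  fix j assume "j < length ws"
  then show "gdist E (ws!j) a < gdist E (ws!j) b"
  proof (induction j)
    case 0 then show ?case using h w by (simp add: hd_conv_nth is_walk_def)
  next
    case (Suc j)
    have e: "E (ws!j) (ws!Suc j)" using w Suc.prems unfolding is_walk_def by blast
    have "ws!j \<noteq> a" using na Suc.prems by (metis Suc_lessD nth_mem)
    show ?case
    proof (rule ccontr)
      assume "\<not> ?case"
      then have "gdist E (ws!Suc j) b < gdist E (ws!Suc j) a" using parity[OF ab, of "ws!Suc j"] by linarith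
      then show False using edge_claim[OF ab e] Suc \<open>ws!j \<noteq> a\<close> by simp
    qed
  qed
qed

lemma crossing:
  assumes ab: "E a b" and u: "gdist E u a < gdist E u b" and w: "gdist E w b < gdist E w a"
  shows "gdist E u a \<le> gdist E u w"
proof -
  obtain ws where W: "is_walk E ws" "hd ws = u" "last ws = w" "length ws = Suc (gdist E u w)" "distinct ws"
    using shortest by metis
  have "a \<in> set ws"
  proof (rule ccontr)
    assume "a \<notin> set ws"
    from side_inv[OF ab W(1) _ this] W u have "gdist E (ws ! (length ws - 1)) a < gdist E (ws ! (length ws - 1)) b" by simp
    moreover have "ws \<noteq> []" using W(4) by auto
    then have "ws ! (length ws - 1) = w" using W(3) last_conv_nth[of ws] by simp
    ultimately show False using w by simp
  qed
  then obtain j where j: "j < length ws" "ws!j = a" by (auto simp: in_set_conv_nth)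
  show ?thesis using SUB[OF W(1) j(1)] j W by simp
qed

lemma seg_avoid:
  assumes range: "\<forall>u v. gdist E u v > k \<longrightarrow> p u v = 0"
    and ab: "E a b" and t: "gdist E t b < gdist E t a"
    and ca: "gdist E a c = Suc k" and cb: "k < gdist E b c"
    and g: "g \<in> Ph p c c' (- kball E k a)"
  shows "\<forall>j. 0 < j \<and> Suc j < length g \<longrightarrow> g!j \<notin> kball E k t"
proof -
  have g0: "g!0 = c" and gne: "g \<noteq> []" using g unfolding Ph_def adm_def by (auto simp: hd_conv_nth)
  have inter: "\<And>j. 0 < j \<Longrightarrow> Suc j < length g \<Longrightarrow> k < gdist E (g!j) a"
    using g unfolding Ph_def kball_def by (auto simp: dsym)
  have step: "gdist E (g!j) (g!Suc j) \<le> k" if "Suc j < length g" for j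
  proof -
    have "0 < p (g!j) (g!Suc j)" using g that unfolding Ph_def adm_def by auto
    then show ?thesis using range by (metis not_le less_irrefl)
  qed
  have claim: "Suc j < length g \<longrightarrow> gdist E (g!j) a < gdist E (g!j) b \<and> k < gdist E (g!j) a" for j
  proof (induction j)
    case 0
    have "gdist E c a = Suc k" "k < gdist E c b" using ca cb dsym by metis+
    then show ?case using g0 parity[OF ab, of c] by auto
  next
    case (Suc j)
    show ?case
    proof
      assume sj: "Suc (Suc j) < length g"
      then have ih: "gdist E (g!j) a < gdist E (g!j) b" "k < gdist E (g!j) a" using Suc by auto
      have kk: "k < gdist E (g!Suc j) a" using inter sj by simp
      have "gdist E (g!Suc j) a < gdist E (g!Suc j) b"
      proof (rule ccontr)
        assume "\<not> ?thesis"
        then have "gdist E (g!Suc j) b < gdist E (g!Suc j) a" using parity[OF ab, of "g!Suc j"] by linarith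
        from crossing[OF ab ih(1) this] step[of j] sj ih(2) show False by simp
      qed
      then show "gdist E (g!Suc j) a < gdist E (g!Suc j) b \<and> k < gdist E (g!Suc j) a" using kk by simp
    qed
  qed
  show ?thesis
  proof (intro allI impI)
    fix j assume j: "0 < j \<and> Suc j < length g"
    then have "gdist E (g!j) a < gdist E (g!j) b" "k < gdist E (g!j) a" using claim by auto
    moreover have "gdist E (g!j) a \<le> gdist E (g!j) t" using crossing[OF ab calculation(1) t] .
    ultimately have "k < gdist E t (g!j)" using dsym by (metis order_less_le_trans)
    then show "g!j \<notin> kball E k t" unfolding kball_def by simp
  qed
qed

lemma geod_facts:
  assumes geo: "geodesic E x y xs" and i: "Suc i < length xs"
  shows "E (xs!i) (xs!Suc i)"
    "gdist E (last xs) (xs!Suc i) < gdist E (last xs) (xs!i)"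
proof -
  have w: "is_walk E xs" and hx: "hd xs = x" and ly: "last xs = y" and len: "length xs = Suc (gdist E x y)"
    using geo unfolding geodesic_def by auto
  show "E (xs!i) (xs!Suc i)" using w i unfolding is_walk_def by blast
  define m where "m = gdist E x y"
  have "gdist E (xs!Suc i) (last xs) \<le> length xs - 1 - Suc i" using SUF[OF w i] .
  moreover have "gdist E x y \<le> gdist E x (xs!i) + gdist E (xs!i) y" by (rule dtri)
  moreover have "gdist E x (xs!i) \<le> i" using SUB[OF w, of i] i hx by simp
  ultimately have "gdist E (xs!Suc i) (last xs) < gdist E (xs!i) (last xs)" using len ly i by simp
  then show "gdist E (last xs) (xs!Suc i) < gdist E (last xs) (xs!i)" using dsym by metis
qed

end


lemma XI_facts:
  assumes "cs \<in> Xi_geod E p k xs"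
  shows "0 < length cs - 1"
    "\<And>s. s < length cs - 1 \<Longrightarrow> 0 < cidx E k xs (cs!s) \<and> cidx E k xs (cs!s) \<le> length xs - 1 \<and>
        cs!s \<in> ksphere E k (xs!cidx E k xs (cs!s)) \<and> cs!Suc s \<in> kball E k (xs!cidx E k xs (cs!s))"
    "cs!(length cs - 1) \<in> kball E k (xs!(length xs - 1))"
proof -
  define l where "l = length cs - 1"
  define m where "m = length xs - 1"
  define ix where "ix = (\<lambda>s. cidx E k xs (cs!(s-1)))"
  have X: "0 < l \<and> l \<le> m \<and>
     (\<forall>s\<in>{1..l}. 0 < ix s \<and> ix s \<le> m) \<and>
     (\<forall>s. 1 \<le> s \<and> s < l \<longrightarrow> ix s < ix (Suc s)) \<and>
     cs!0 \<in> kball E k (xs!0) \<inter> ksphere E k (xs!(ix 1)) \<and>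
     (\<forall>j. 1 \<le> j \<and> j < l \<longrightarrow> cs!j \<in> kball E k (xs!(ix j)) \<inter> ksphere E k (xs!(ix (Suc j)))) \<and>
     cs!l \<in> kball E k (xs!(ix l)) \<inter> kball E k (xs!m) \<and>
     (\<forall>j\<in>{1..l}. (cs!(j-1), cs!j) \<in> Xi_v E p k (xs!(ix j)))"
    using assms unfolding Xi_geod_def Let_def l_def m_def ix_def by simp
  show "0 < length cs - 1" using X l_def by simp
  show "cs!(length cs - 1) \<in> kball E k (xs!(length xs - 1))" using X l_def m_def by simp
  fix s assume s: "s < length cs - 1"
  have ixs: "ix (Suc s) = cidx E k xs (cs!s)" unfolding ix_def by simp
  have A: "0 < cidx E k xs (cs!s) \<and> cidx E k xs (cs!s) \<le> length xs - 1"
    using X s ixs l_def m_def by (metis One_nat_def Suc_leI atLeastAtMost_iff le_add1 plus_1_eq_Suc zero_less_Suc)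
  have B: "cs!s \<in> ksphere E k (xs!cidx E k xs (cs!s))"
  proof (cases s)
    case 0 then show ?thesis using X ixs by simp
  next
    case (Suc s') then show ?thesis using X ixs s l_def by auto
  qed
  have C: "cs!Suc s \<in> kball E k (xs!cidx E k xs (cs!s))"
  proof (cases "Suc s = l")
    case True then show ?thesis using X ixs by (metis IntD1)
  next
    case False
    then have "Suc s < l" using s l_def by simp
    moreover have Xj: "\<forall>j. 1 \<le> j \<and> j < l \<longrightarrow> cs!j \<in> kball E k (xs!(ix j)) \<inter> ksphere E k (xs!(ix (Suc j)))"
      using X by blast
    ultimately have "cs!Suc s \<in> kball E k (xs!(ix (Suc s)))" by auto
    then show ?thesis using ixs by simp
  qed
  show "0 < cidx E k xs (cs!s) \<and> cidx E k xs (cs!s) \<le> length xs - 1 \<and>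
        cs!s \<in> ksphere E k (xs!cidx E k xs (cs!s)) \<and> cs!Suc s \<in> kball E k (xs!cidx E k xs (cs!s))"
    using A B C by blast
qed

lemma cidx_gt: "j < length xs \<Longrightarrow> c \<in> kball E k (xs!j) \<Longrightarrow> j < cidx E k xs c"
proof -
  assume j: "j < length xs" and c: "c \<in> kball E k (xs!j)"
  have "finite {i. i < length xs \<and> c \<in> kball E k (xs!i)}" by simp
  then have "j \<le> Max {i. i < length xs \<and> c \<in> kball E k (xs!i)}" using j c by (intro Max_ge) auto
  then show ?thesis unfolding cidx_def by simp
qed

lemma tail_triv:
  assumes "\<gamma> = pcat P gf" "P \<noteq> []" "gf \<noteq> []" "hd gf = last P" "\<gamma> \<in> Ph p a b (-B)" "last P \<in> B" "a \<notin> B"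
  shows "gf = [last P] \<and> \<gamma> = P"
proof -
  have "tl gf = []"
  proof (rule ccontr)
    assume ne: "tl gf \<noteq> []"
    define j where "j = length P - 1"
    have gj: "\<gamma>!j = last P" using assms(1,2) unfolding pcat_def j_def by (simp add: nth_append last_conv_nth)
    show False
    proof (cases "j = 0")
      case True
      then have "\<gamma>!0 = a" using assms(5) unfolding Ph_def adm_def by (auto simp: hd_conv_nth)
      then show False using True gj assms(6,7) by simp
    next
      case False
      have "Suc j < length \<gamma>" using assms(1,2) ne unfolding pcat_def j_def by (cases gf) auto
      then have "\<gamma>!j \<in> -B" using False assms(5) unfolding Ph_def by auto
      then show False using gj assms(6) by simp
    qed
  qed
  then have "gf = [last P]" using assms(3,4) by (metis list.collapse)
  then show ?thesis using assms(1) unfolding pcat_def by simp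
qed

lemma Ph_UNIV: "g \<in> Ph p a b A \<Longrightarrow> g \<in> Ph p a b UNIV" unfolding Ph_def by auto

theorem corollary3p21:
  fixes E :: "'v \<Rightarrow> 'v \<Rightarrow> bool" and p :: "'v \<Rightarrow> 'v \<Rightarrow> real" and k :: nat
    and x y a b :: 'v and xs :: "'v list"
  assumes tree: "is_tree E" and valence: "bounded_valence E"
    and kernel: "transition_kernel p" and irred: "irreducible_kernel p"
    and range: "\<forall>u v. gdist E u v > k \<longrightarrow> p u v = 0"
    and a: "a \<in> kball E k x - kball E k y" and b: "b \<in> kball E k y"
    and xy: "x \<noteq> y" and geo: "geodesic E x y xs"
  shows "(\<forall>\<gamma> cs gs gf. \<gamma> \<in> Ph p a b (- kball E k y) \<and> decomp E p k xs \<gamma> cs gs gf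
            \<longrightarrow> last cs = b \<and> gf = [b])
       \<and> (\<forall>cs \<in> Xi_geod E p k xs.
            bij_betw pchain
              {gs. length gs = length cs - 1 \<and>
                   (\<forall>s < length gs. gs!s \<in> Ph p (cs!s) (cs!Suc s) (- kball E k (xs ! cidx E k xs (cs!s))))}
              {\<gamma> \<in> Ph p (hd cs) (last cs) (- kball E k (last xs)).
                   \<exists>gs gf. decomp E p k xs \<gamma> cs gs gf})"
proof -
  have xsne: "xs \<noteq> []" using geo unfolding geodesic_def is_walk_def by auto
  have ly: "last xs = y" using geo unfolding geodesic_def by auto
  have lxs: "xs!(length xs - 1) = last xs" using xsne by (simp add: last_conv_nth)
  have cs_basic: "hd cs = cs!0 \<and> last cs = cs!(length cs - 1) \<and> cs \<noteq> []" if "cs \<in> Xi_geod E p k xs" for cs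
  proof -
    have "cs \<noteq> []" using XI_facts(1)[OF that] by auto
    then show ?thesis by (simp add: hd_conv_nth last_conv_nth)
  qed
  have chainU: "pchain gs \<in> Ph p (cs!0) (cs!length gs) UNIV"
    if "length gs = length cs - 1" "cs \<in> Xi_geod E p k xs"
       "\<forall>s < length gs. gs!s \<in> Ph p (cs!s) (cs!Suc s) (- kball E k (xs ! cidx E k xs (cs!s)))" for gs cs
  proof -
    have "gs \<noteq> []" using XI_facts(1)[OF that(2)] that(1) by auto
    moreover have "\<forall>s<length gs. gs!s \<in> Ph p (cs!s) (cs!Suc s) UNIV"
      using that(3) Ph_UNIV by metis
    ultimately show ?thesis using chain_Ph[of gs p "\<lambda>s. cs!s" UNIV] by simp
  qed
  have tailP: "gf = [last cs] \<and> \<gamma> = pchain gs"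
    if d: "decomp E p k xs \<gamma> cs gs gf" and g: "\<gamma> \<in> Ph p a' b' (- kball E k (last xs))"
      and a': "a' \<notin> kball E k (last xs)" for \<gamma> cs gs gf a' b'
  proof -
    have cs: "cs \<in> Xi_geod E p k xs" and lg: "length gs = length cs - 1"
      and segs: "\<forall>s < length gs. gs!s \<in> Ph p (cs!s) (cs!Suc s) (- kball E k (xs ! cidx E k xs (cs!s)))"
      and gf: "adm p gf" "hd gf = last cs" and eq: "\<gamma> = pcat (pchain gs) gf"
      using d unfolding decomp_def by auto
    have P: "pchain gs \<in> Ph p (cs!0) (cs!length gs) UNIV" using chainU[OF lg cs segs] .
    then have Pne: "pchain gs \<noteq> []" and lP: "last (pchain gs) = last cs"
      using cs_basic[OF cs] lg unfolding Ph_def adm_def by auto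
    have "last cs \<in> kball E k (last xs)" using XI_facts(3)[OF cs] cs_basic[OF cs] lxs by simp
    then show ?thesis using tail_triv[OF eq Pne _ _ g _ a'] gf lP unfolding adm_def by auto
  qed
  show ?thesis
  proof (rule conjI; intro allI impI ballI)
    fix \<gamma> cs gs gf
    assume h: "\<gamma> \<in> Ph p a b (- kball E k y) \<and> decomp E p k xs \<gamma> cs gs gf"
    have "a \<notin> kball E k (last xs)" using a ly by simp
    then have t: "gf = [last cs] \<and> \<gamma> = pchain gs" using tailP[of \<gamma> cs gs gf a b] h ly by simp
    have "last \<gamma> = b" using h unfolding Ph_def by simp
    moreover have "last \<gamma> = last cs"
    proof -
      have cs: "cs \<in> Xi_geod E p k xs" and lg: "length gs = length cs - 1"
        and segs: "\<forall>s < length gs. gs!s \<in> Ph p (cs!s) (cs!Suc s) (- kball E k (xs ! cidx E k xs (cs!s)))"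
        using h unfolding decomp_def by auto
      show ?thesis using chainU[OF lg cs segs] t cs_basic[OF cs] lg unfolding Ph_def by auto
    qed
    ultimately show "last cs = b \<and> gf = [b]" using t by simp
  next
    fix cs assume cs: "cs \<in> Xi_geod E p k xs"
    define l where "l = length cs - 1"
    define BB where "BB = (\<lambda>s. kball E k (xs ! cidx E k xs (cs!s)))"
    note F = XI_facts(2)[OF cs, folded l_def]
    have notB: "cs!s \<notin> BB s" if "s < l" for s
      using F[OF that] unfolding BB_def ksphere_def kball_def by simp
    have inB: "cs!Suc s \<in> BB s" if "s < l" for s
      using F[OF that] unfolding BB_def by simp
    have notlast: "cs!j \<notin> kball E k (last xs)" if "j < l" for j
    proof
      assume "cs!j \<in> kball E k (last xs)"
      then have "length xs - 1 < cidx E k xs (cs!j)" using cidx_gt[of "length xs - 1" xs "cs!j" E k] xsne lxs by simp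
      then show False using F[OF that] by simp
    qed
    have segA: "gs!s \<in> Ph p (cs!s) (cs!Suc s) (- kball E k (last xs))"
      if s: "s < l" and g: "gs!s \<in> Ph p (cs!s) (cs!Suc s) (- kball E k (xs ! cidx E k xs (cs!s)))" for gs s
    proof (cases "cidx E k xs (cs!s) = length xs - 1")
      case True then show ?thesis using g lxs by simp
    next
      case False
      define i where "i = cidx E k xs (cs!s)"
      have "i \<le> length xs - 1" using F[OF s] i_def by simp
      then have si: "Suc i < length xs" using False i_def by simp
      note G = geod_facts[OF tree geo si]
      have ca: "gdist E (xs!i) (cs!s) = Suc k" using F[OF s] i_def unfolding ksphere_def by simp
      have cb: "k < gdist E (xs!Suc i) (cs!s)"
      proof (rule ccontr)
        assume "\<not> ?thesis"
        then have "cs!s \<in> kball E k (xs!Suc i)" unfolding kball_def by simp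
        then have "Suc i < cidx E k xs (cs!s)" by (rule cidx_gt[OF si])
        then show False using i_def by simp
      qed
      have g': "gs!s \<in> Ph p (cs!s) (cs!Suc s) (- kball E k (xs!i))" using g i_def by simp
      have h1: "\<forall>j. 0 < j \<and> Suc j < length (gs!s) \<longrightarrow> (gs!s)!j \<notin> kball E k (last xs)"
        by (rule seg_avoid[OF tree range G(1) G(2) ca cb g'])
      have h2: "adm p (gs!s) \<and> hd (gs!s) = cs!s \<and> last (gs!s) = cs!Suc s" using g' unfolding Ph_def by simp
      show ?thesis using h1 h2 unfolding Ph_def by simp
    qed
    let ?D = "{gs. length gs = length cs - 1 \<and>
                   (\<forall>s < length gs. gs!s \<in> Ph p (cs!s) (cs!Suc s) (- kball E k (xs ! cidx E k xs (cs!s))))}"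
    let ?T = "{\<gamma> \<in> Ph p (hd cs) (last cs) (- kball E k (last xs)). \<exists>gs gf. decomp E p k xs \<gamma> cs gs gf}"
    have l0: "0 < l" using XI_facts(1)[OF cs] l_def by simp
    have hl: "hd cs = cs!0" "last cs = cs!l" using cs_basic[OF cs] l_def by auto
    have inj: "inj_on pchain ?D"
    proof (rule inj_onI)
      fix gs1 gs2 assume g1: "gs1 \<in> ?D" and g2: "gs2 \<in> ?D" and eq: "pchain gs1 = pchain gs2"
      have "\<forall>s<length gs1. gs1!s \<in> Ph p (cs!s) (cs!Suc s) (-BB s) \<and> gs2!s \<in> Ph p (cs!s) (cs!Suc s) (-BB s)
          \<and> cs!s \<notin> BB s \<and> cs!Suc s \<in> BB s"
      proof (intro allI impI)
        fix s assume s: "s < length gs1"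
        then have sl: "s < l" using g1 l_def by simp
        have "gs1!s \<in> Ph p (cs!s) (cs!Suc s) (-BB s)" using g1 s unfolding BB_def by simp
        moreover have "gs2!s \<in> Ph p (cs!s) (cs!Suc s) (-BB s)" using g2 g1 s unfolding BB_def by simp
        ultimately show "gs1!s \<in> Ph p (cs!s) (cs!Suc s) (-BB s) \<and> gs2!s \<in> Ph p (cs!s) (cs!Suc s) (-BB s)
          \<and> cs!s \<notin> BB s \<and> cs!Suc s \<in> BB s" using notB[OF sl] inB[OF sl] by simp
      qed
      moreover have "length gs1 = length gs2" using g1 g2 by simp
      ultimately show "gs1 = gs2" using chain_inj[of gs1 gs2 p "\<lambda>s. cs!s" BB] eq by blast
    qed
    have img1: "pchain gs \<in> ?T" if gs: "gs \<in> ?D" for gs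
    proof -
      have lg: "length gs = l" using gs l_def by simp
      have "gs \<noteq> []" using lg l0 by auto
      moreover have "\<forall>s<length gs. gs!s \<in> Ph p (cs!s) (cs!Suc s) (- kball E k (last xs))"
        using gs segA lg by auto
      moreover have "\<forall>j. 0 < j \<and> j < length gs \<longrightarrow> cs!j \<in> - kball E k (last xs)"
        using notlast lg by auto
      ultimately have "pchain gs \<in> Ph p (cs!0) (cs!length gs) (- kball E k (last xs))"
        by (rule chain_Ph)
      then have P: "pchain gs \<in> Ph p (hd cs) (last cs) (- kball E k (last xs))" using hl lg by simp
      have "decomp E p k xs (pchain gs) cs gs [last cs]"
        unfolding decomp_def using cs gs by (simp add: adm_def pcat_def)
      then show ?thesis using P by (intro CollectI conjI exI)
    qed
    have img2: "\<gamma> \<in> pchain ` ?D" if g: "\<gamma> \<in> ?T" for \<gamma>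
    proof -
      obtain gs gf where d: "decomp E p k xs \<gamma> cs gs gf" using g by blast
      have gP: "\<gamma> \<in> Ph p (hd cs) (last cs) (- kball E k (last xs))" using g by blast
      have "hd cs \<notin> kball E k (last xs)" using notlast[OF l0] hl by simp
      then have "\<gamma> = pchain gs" using tailP[OF d gP] by simp
      moreover have "gs \<in> ?D" using d unfolding decomp_def by simp
      ultimately show ?thesis by (rule image_eqI)
    qed
    have "pchain ` ?D = ?T"
    proof (rule equalityI)
      show "pchain ` ?D \<subseteq> ?T" using img1 by (rule image_subsetI)
      show "?T \<subseteq> pchain ` ?D" using img2 by (rule subsetI)
    qed
    then show "bij_betw pchain ?D ?T"
      unfolding bij_betw_def using inj by (rule conjI[rotated])
  qed
qed

end
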